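(* Let $(X,d_X)$ and $(Y,d_Y)$ be ultrametric spaces and let $d$ be a partial distance-preserving metric on $X\times Y$ with $d_\infty\le d$. Suppose that $\mathcal N_\varepsilon(W\times Z)=\mathcal N_\varepsilon(W)\cdot\mathcal N_\varepsilon(Z)$ for all compact sets $W\subseteq X$, $Z\subseteq Y$ and every $\varepsilon>0$ (quantities computed in $(X,d_X)$, $(Y,d_Y)$, $(X\times Y,d)$ respectively). Then for all $x_1,x_2\in X$ and $y_1,y_2\in Y$, $$\min\{d((x_1,y_1),(x_2,y_2)),\,d((x_2,y_1),(x_1,y_2))\}=\max\{d_X(x_1,x_2),d_Y(y_1,y_2)\}.$$
   Context: $d_\infty((x_1,y_1),(x_2,y_2))=\max\{d_X(x_1,x_2),d_Y(y_1,y_2)\}$. A metric $d$ on $X\times Y$ is partial distance-preserving if $d((x_1,y),(x_2,y))=d_X(x_1,x_2)$ and $d((x,y_1),(x,y_2))=d_Y(y_1,y_2)$ for all $x,x_1,x_2\in X$, $y,y_1,y_2\in Y$. Ultrametric: $\rho(a,b)\le\max\{\rho(a,c),\rho(c,b)\}$. In a metric space $(M,\rho)$ with closed balls $B(c,r)=\{x:\rho(x,c)\le r\}$, $C$ is an $\varepsilon$-net for $V$ if $V\subseteq\bigcup_{c\in C}B(c,\varepsilon)$, and for totally bounded $V$ the covering number $\mathcal N_\varepsilon(V)$ is the smallest cardinality of a subset of $V$ that is an $\varepsilon$-net for $V$. *)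

theory Defs
  imports "HOL-Analysis.Analysis"
begin

definition ultrametric :: "'a set \<Rightarrow> ('a \<Rightarrow> 'a \<Rightarrow> real) \<Rightarrow> bool" where
  "ultrametric M d \<longleftrightarrow> Metric_space M d \<and>
     (\<forall>a\<in>M. \<forall>b\<in>M. \<forall>c\<in>M. d a b \<le> max (d a c) (d c b))"

definition is_net :: "'a set \<Rightarrow> ('a \<Rightarrow> 'a \<Rightarrow> real) \<Rightarrow> real \<Rightarrow> 'a set \<Rightarrow> 'a set \<Rightarrow> bool" where
  "is_net M d eps V C \<longleftrightarrow> V \<subseteq> (\<Union>c\<in>C. Metric_space.mcball M d c eps)"

definition covering_number :: "'a set \<Rightarrow> ('a \<Rightarrow> 'a \<Rightarrow> real) \<Rightarrow> real \<Rightarrow> 'a set \<Rightarrow> nat" where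
  "covering_number M d eps V =
     (LEAST n. \<exists>C. C \<subseteq> V \<and> finite C \<and> card C = n \<and> is_net M d eps V C)"

definition partial_distance_preserving ::
  "'a set \<Rightarrow> ('a \<Rightarrow> 'a \<Rightarrow> real) \<Rightarrow> 'b set \<Rightarrow> ('b \<Rightarrow> 'b \<Rightarrow> real)
     \<Rightarrow> ('a \<times> 'b \<Rightarrow> 'a \<times> 'b \<Rightarrow> real) \<Rightarrow> bool" where
  "partial_distance_preserving X dX Y dY d \<longleftrightarrow>
     (\<forall>x1\<in>X. \<forall>x2\<in>X. \<forall>y\<in>Y. d (x1, y) (x2, y) = dX x1 x2) \<and>
     (\<forall>x\<in>X. \<forall>y1\<in>Y. \<forall>y2\<in>Y. d (x, y1) (x, y2) = dY y1 y2)"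

end

theory Submission
  imports Defs
begin

lemma cn_le:
  assumes "C \<subseteq> V" "finite C" "is_net M d eps V C"
  shows "covering_number M d eps V \<le> card C"
  unfolding covering_number_def using assms by (intro Least_le) blast

lemma cn_one:
  assumes "C \<subseteq> V" "finite C" "is_net M d eps V C" "V \<noteq> {}"
    and "covering_number M d eps V \<le> 1"
  shows "\<exists>c\<in>V. V \<subseteq> Metric_space.mcball M d c eps"
proof -
  have "\<exists>C. C \<subseteq> V \<and> finite C \<and> card C = covering_number M d eps V \<and> is_net M d eps V C"
    unfolding covering_number_def
    by (rule LeastI_ex) (use assms in blast)
  then obtain C' where C': "C' \<subseteq> V" "finite C'" "card C' \<le> 1" "is_net M d eps V C'"
    using assms(5) by auto
  have "C' \<noteq> {}" using C'(4) assms(4) unfolding is_net_def by auto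
  then have "card C' = 1" using C'(2,3) by (simp add: card_gt_0_iff le_antisym Suc_le_eq)
  then obtain c where "C' = {c}" by (rule card_1_singletonE)
  then show ?thesis using C' unfolding is_net_def by auto
qed

theorem proposition4p7:
  fixes X :: "'a set" and dX :: "'a \<Rightarrow> 'a \<Rightarrow> real"
    and Y :: "'b set" and dY :: "'b \<Rightarrow> 'b \<Rightarrow> real"
    and d :: "'a \<times> 'b \<Rightarrow> 'a \<times> 'b \<Rightarrow> real"
  assumes uX: "ultrametric X dX"
    and uY: "ultrametric Y dY"
    and md: "Metric_space (X \<times> Y) d"
    and pdp: "partial_distance_preserving X dX Y dY d"
    and dinf: "\<And>x1 x2 y1 y2. x1 \<in> X \<Longrightarrow> x2 \<in> X \<Longrightarrow> y1 \<in> Y \<Longrightarrow> y2 \<in> Y \<Longrightarrow>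
                 max (dX x1 x2) (dY y1 y2) \<le> d (x1, y1) (x2, y2)"
    and cov: "\<And>W Z eps. compactin (Metric_space.mtopology X dX) W \<Longrightarrow>
                 compactin (Metric_space.mtopology Y dY) Z \<Longrightarrow> eps > 0 \<Longrightarrow>
                 covering_number (X \<times> Y) d eps (W \<times> Z) =
                   covering_number X dX eps W * covering_number Y dY eps Z"
    and x: "x1 \<in> X" "x2 \<in> X" and y: "y1 \<in> Y" "y2 \<in> Y"
  shows "min (d (x1, y1) (x2, y2)) (d (x2, y1) (x1, y2)) = max (dX x1 x2) (dY y1 y2)"
proof -
  have mX: "Metric_space X dX" using uX unfolding ultrametric_def by auto
  have mY: "Metric_space Y dY" using uY unfolding ultrametric_def by auto
  define m where "m = max (dX x1 x2) (dY y1 y2)"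
  have sX: "dX x2 x1 = dX x1 x2" using Metric_space.commute[OF mX] x by metis
  have ge: "m \<le> min (d (x1, y1) (x2, y2)) (d (x2, y1) (x1, y2))"
    using dinf[OF x(1,2) y] dinf[OF x(2,1) y] sX unfolding m_def by simp
  have le: "min (d (x1, y1) (x2, y2)) (d (x2, y1) (x1, y2)) \<le> m"
  proof (rule ccontr)
    assume "\<not> ?thesis"
    hence A: "d (x1, y1) (x2, y2) > m" "d (x2, y1) (x1, y2) > m" by auto
    have mpos: "m > 0"
    proof (rule ccontr)
      assume "\<not> m > 0"
      hence "dX x1 x2 \<le> 0" unfolding m_def by auto
      hence "dX x1 x2 = 0" using Metric_space.nonneg[OF mX] by (meson order_antisym)
      hence "x1 = x2" using Metric_space.zero[OF mX] x by blast
      hence "d (x1, y1) (x2, y2) = dY y1 y2" using pdp x y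
        unfolding partial_distance_preserving_def by auto
      thus False using A unfolding m_def by auto
    qed
    let ?W = "{x1, x2}" and ?Z = "{y1, y2}"
    have cW: "compactin (Metric_space.mtopology X dX) ?W"
      by (rule finite_imp_compactin) (use x Metric_space.topspace_mtopology[OF mX] in auto)
    have cZ: "compactin (Metric_space.mtopology Y dY) ?Z"
      by (rule finite_imp_compactin) (use y Metric_space.topspace_mtopology[OF mY] in auto)
    have nW: "is_net X dX m ?W {x1}"
    proof -
      have "x1 \<in> Metric_space.mcball X dX x1 m"
        using x mpos Metric_space.in_mcball[OF mX] Metric_space.mdist_zero[OF mX] by simp
      moreover have "x2 \<in> Metric_space.mcball X dX x1 m"
        using x Metric_space.in_mcball[OF mX] unfolding m_def by simp
      ultimately show ?thesis unfolding is_net_def by simp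
    qed
    have nZ: "is_net Y dY m ?Z {y1}"
    proof -
      have "y1 \<in> Metric_space.mcball Y dY y1 m"
        using y mpos Metric_space.in_mcball[OF mY] Metric_space.mdist_zero[OF mY] by simp
      moreover have "y2 \<in> Metric_space.mcball Y dY y1 m"
        using y Metric_space.in_mcball[OF mY] unfolding m_def by simp
      ultimately show ?thesis unfolding is_net_def by simp
    qed
    have "covering_number X dX m ?W \<le> 1" using cn_le[OF _ _ nW] by auto
    moreover have "covering_number Y dY m ?Z \<le> 1" using cn_le[OF _ _ nZ] by auto
    ultimately have c1: "covering_number (X \<times> Y) d m (?W \<times> ?Z) \<le> 1"
      unfolding cov[OF cW cZ mpos] using mult_le_mono by fastforce
    have fin: "finite (?W \<times> ?Z)" by simp
    have net: "is_net (X \<times> Y) d m (?W \<times> ?Z) (?W \<times> ?Z)"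
      unfolding is_net_def
    proof
      fix p assume p: "p \<in> ?W \<times> ?Z"
      hence "p \<in> X \<times> Y" using x y by auto
      hence "p \<in> Metric_space.mcball (X \<times> Y) d p m"
        using mpos Metric_space.in_mcball[OF md] Metric_space.mdist_zero[OF md] by simp
      thus "p \<in> (\<Union>c\<in>?W \<times> ?Z. Metric_space.mcball (X \<times> Y) d c m)" using p by blast
    qed
    obtain c where c: "c \<in> ?W \<times> ?Z" and cb: "?W \<times> ?Z \<subseteq> Metric_space.mcball (X \<times> Y) d c m"
      using cn_one[OF subset_refl fin net _ c1] by auto
    have dc: "\<And>p. p \<in> ?W \<times> ?Z \<Longrightarrow> d c p \<le> m"
      using cb Metric_space.in_mcball[OF md] by blast
    have sym: "\<And>p q. p \<in> X \<times> Y \<Longrightarrow> q \<in> X \<times> Y \<Longrightarrow> d p q = d q p"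
      using Metric_space.commute[OF md] by blast
    have "c = (x1,y1) \<or> c = (x1,y2) \<or> c = (x2,y1) \<or> c = (x2,y2)" using c by blast
    moreover have "c \<noteq> (x1, y1)" using dc[of "(x2,y2)"] A by auto
    moreover have "c \<noteq> (x2, y1)" using dc[of "(x1,y2)"] A by auto
    moreover have "c \<noteq> (x1, y2)" using dc[of "(x2,y1)"] A sym[of "(x1,y2)" "(x2,y1)"] x y by auto
    moreover have "c \<noteq> (x2, y2)" using dc[of "(x1,y1)"] A sym[of "(x1,y1)" "(x2,y2)"] x y by auto
    ultimately show False by blast
  qed
  show ?thesis using ge le unfolding m_def by linarith
qed

end
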